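(* Let $d\ge1$, $q\in(0,\infty]$ and let $U(q,x)$ be as defined in the context. There exists $C_4=C_4(d,q)\in(0,\infty)$ such that for all $x\ge1$ $$U(q,x)\ge \exp\big(-C_4\,x^{\min(q,2)/d}\big).$$
   Context: For $x>0$ and a random variable $\tau$, $T(\tau,x)=\max(\mathbf P(\tau>x),\mathbf P(\tau<-x))$. Let $\{\xi(i,m): i\ge1,\ 1\le m\le d\}$ be mutually independent centered random variables. Let $\mathcal K_d$ be the set of vectors $k\in\{0,1,\dots,d\}^d$ with $\sum_l k(l)=d$; for $k\in\mathcal K_d$ let $l_1<\dots<l_s$ be the indices with $k(l)>0$. A centered polynomial of degree $d$ with diagonal members is $$R_d=\sum_{k\in\mathcal K_d}\ \sum_{1\le j_1<\dots<j_s\le n} b_k(j_1,\dots,j_s)\prod_{r=1}^s\Big(\xi(j_r,l_r)^{k(l_r)}-\mathbf E\,\xi(j_r,l_r)^{k(l_r)}\Big),$$ with $\sum_{k}\sum_j b_k(j)^2=1$. $U(q,x)$ is the supremum of $T(R_d,x)$ over all $n\ge1$, all such normalized coefficients, and all totally independent centered families $\{\xi(i,m)\}$ with $T(\xi(i,m),x)\le \exp(-x^q)$ for all $x\ge0$ and all $i,m$. *)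

theory Defs
  imports "HOL-Probability.Probability"
begin

definition Tfun :: "'a measure \<Rightarrow> ('a \<Rightarrow> real) \<Rightarrow> real \<Rightarrow> real" where
  "Tfun M tau x = max (measure M {w \<in> space M. tau w > x}) (measure M {w \<in> space M. tau w < - x})"

text \<open>The tail bound exp(-x^q), with q in (0,infinity]; for q = infinity we use the
  convention x^infinity = 0 (x<1), 1 (x=1), infinity (x>1), exp(-infinity) = 0.\<close>
definition tail_bound :: "ereal \<Rightarrow> real \<Rightarrow> real" where
  "tail_bound q x = (if q = \<infinity> then (if x < 1 then 1 else if x = 1 then exp (-1) else 0)
                     else exp (- (x powr real_of_ereal q)))"

definition Kset :: "nat \<Rightarrow> (nat \<Rightarrow> nat) set" where
  "Kset d = {k. (\<forall>l. l \<notin> {1..d} \<longrightarrow> k l = 0) \<and> (\<forall>l. k l \<le> d) \<and> (\<Sum>l\<in>{1..d}. k l) = d}"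

definition supp_list :: "nat \<Rightarrow> (nat \<Rightarrow> nat) \<Rightarrow> nat list" where
  "supp_list d k = sorted_list_of_set {l \<in> {1..d}. k l > 0}"

definition Jset :: "nat \<Rightarrow> nat \<Rightarrow> nat list set" where
  "Jset n s = {js. length js = s \<and> sorted_wrt (<) js \<and> set js \<subseteq> {1..n}}"

definition Rpoly :: "'a measure \<Rightarrow> nat \<Rightarrow> nat \<Rightarrow> ((nat \<Rightarrow> nat) \<Rightarrow> nat list \<Rightarrow> real)
     \<Rightarrow> (nat \<Rightarrow> nat \<Rightarrow> 'a \<Rightarrow> real) \<Rightarrow> 'a \<Rightarrow> real" where
  "Rpoly M d n b xi w =
     (\<Sum>k\<in>Kset d. let L = supp_list d k in
        \<Sum>js\<in>Jset n (length L). b k js *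
          (\<Prod>r<length L. (xi (js ! r) (L ! r) w) ^ k (L ! r)
                          - integral\<^sup>L M (\<lambda>v. (xi (js ! r) (L ! r) v) ^ k (L ! r))))"

text \<open>The sample space type is fixed to nat => real, on which
  every such (countable) family can be realized.\<close>
definition admissible :: "nat \<Rightarrow> ereal \<Rightarrow> (nat \<Rightarrow> real) measure \<Rightarrow> nat
     \<Rightarrow> ((nat \<Rightarrow> nat) \<Rightarrow> nat list \<Rightarrow> real) \<Rightarrow> (nat \<Rightarrow> nat \<Rightarrow> (nat \<Rightarrow> real) \<Rightarrow> real) \<Rightarrow> bool" where
  "admissible d q M n b xi \<longleftrightarrow>
     prob_space M \<and> n \<ge> 1 \<and>
     (\<Sum>k\<in>Kset d. \<Sum>js\<in>Jset n (length (supp_list d k)). (b k js)\<^sup>2) = 1 \<and>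
     prob_space.indep_vars M (\<lambda>_. borel) (\<lambda>(i, m). xi i m) ({1..} \<times> {1..d}) \<and>
     (\<forall>i\<ge>1. \<forall>m\<in>{1..d}.
        integrable M (xi i m) \<and> integral\<^sup>L M (xi i m) = 0 \<and>
        (\<forall>x\<ge>0. Tfun M (xi i m) x \<le> tail_bound q x))"

definition U :: "nat \<Rightarrow> ereal \<Rightarrow> real \<Rightarrow> real" where
  "U d q x = Sup {Tfun M (Rpoly M d n b xi) x | M n b xi. admissible d q M n b xi}"

end

theory Submission
  imports Defs
begin



definition tp :: "real \<Rightarrow> real \<Rightarrow> real pmf" where
  "tp t p = pmf_of_list [(t,p),(-t,p),(0,1-2*p)]"

lemma tp_wf: "(0::real) \<le> p \<Longrightarrow> p \<le> 1/2 \<Longrightarrow> pmf_of_list_wf [(t,p),(-t,p),(0::real,1-2*p)]"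
  by (auto simp: pmf_of_list_wf_def)

lemma tp_measure: "0 \<le> p \<Longrightarrow> p \<le> 1/2 \<Longrightarrow> measure (tp t p) S =
   (if t \<in> S then p else 0) + (if -t \<in> S then p else 0) + (if 0 \<in> S then 1-2*p else 0)"
  unfolding tp_def by (subst measure_pmf_of_list[OF tp_wf]) auto

lemma tp_set: "0 \<le> p \<Longrightarrow> p \<le> 1/2 \<Longrightarrow> set_pmf (tp t p) \<subseteq> {t,-t,0}"
  unfolding tp_def using set_pmf_of_list[OF tp_wf] by auto

lemma tp_pmf: "0 \<le> p \<Longrightarrow> p \<le> 1/2 \<Longrightarrow> t > 0 \<Longrightarrow> pmf (tp t p) t = p \<and> pmf (tp t p) (-t) = p"
  unfolding tp_def by (simp add: pmf_pmf_of_list[OF tp_wf])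

lemma tp_integral: "0 \<le> p \<Longrightarrow> p \<le> 1/2 \<Longrightarrow> t > 0 \<Longrightarrow> integral\<^sup>L (tp t p) (\<lambda>v. v) = 0"
proof -
  assume a: "0 \<le> p" "p \<le> 1/2" "t > 0"
  have "integral\<^sup>L (tp t p) (\<lambda>v. v) = (\<Sum>v\<in>{t,-t}. v * pmf (tp t p) v)"
    using tp_set[OF a(1,2), of t] by (intro integral_measure_pmf_real) auto
  also have "\<dots> = 0" using a tp_pmf[OF a] by simp
  finally show ?thesis .
qed



lemma (in prob_space) indep_vars_reindex:
  assumes inj: "inj_on g J" and ind: "indep_vars M' Y (g ` J)"
  shows "indep_vars (\<lambda>j. M' (g j)) (\<lambda>j. Y (g j)) J"
proof -
  from ind have rv: "\<forall>i\<in>g ` J. random_variable (M' i) (Y i)"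
    and isd: "indep_sets (\<lambda>i. { Y i -` A \<inter> space M | A. A \<in> sets (M' i)}) (g ` J)"
    unfolding indep_vars_def2 by auto
  show ?thesis unfolding indep_vars_def2
  proof (intro conjI ballI indep_setsI)
    fix j assume "j \<in> J" then show "random_variable (M' (g j)) (Y (g j))" using rv by auto
  next
    fix j assume "j \<in> J" then show "{Y (g j) -` A \<inter> space M |A. A \<in> sets (M' (g j))} \<subseteq> events"
      using rv by (auto intro: measurable_sets)
  next
    fix A K assume K: "K \<noteq> {}" "K \<subseteq> J" "finite K" "\<forall>j\<in>K. A j \<in> {Y (g j) -` A \<inter> space M |A. A \<in> sets (M' (g j))}"
    define A' where "A' a = A (inv_into J g a)" for a
    have inv: "inv_into J g (g j) = j" if "j \<in> K" for j using inj K that by (auto intro: inv_into_f_f)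
    have "prob (\<Inter>a\<in>g ` K. A' a) = (\<Prod>a\<in>g ` K. prob (A' a))"
    proof (rule indep_setsD[OF isd])
      show "g ` K \<subseteq> g ` J" "g ` K \<noteq> {}" "finite (g ` K)" using K by auto
      show "\<forall>j\<in>g ` K. A' j \<in> {Y j -` A \<inter> space M |A. A \<in> sets (M' j)}"
        using K inv by (auto simp: A'_def)
    qed
    moreover have "(\<Inter>a\<in>g ` K. A' a) = (\<Inter>j\<in>K. A j)" using inv by (auto simp: A'_def)
    moreover have "(\<Prod>a\<in>g ` K. prob (A' a)) = (\<Prod>j\<in>K. prob (A j))"
      using inv K inj by (subst prod.reindex) (auto simp: A'_def intro: inj_on_subset)
    ultimately show "prob (\<Inter>j\<in>K. A j) = (\<Prod>j\<in>K. prob (A j))" by simp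
  qed
qed

lemma (in prob_space) indep_vars_extend_const:
  assumes ind: "indep_vars M' X J" and JI: "J \<subseteq> I"
    and const: "\<And>i. i \<in> I - J \<Longrightarrow> \<exists>c. \<forall>w\<in>space M. X i w = c"
    and rv: "\<And>i. i \<in> I \<Longrightarrow> random_variable (M' i) (X i)"
  shows "indep_vars M' X I"
proof -
  from ind have isd: "indep_sets (\<lambda>i. { X i -` A \<inter> space M | A. A \<in> sets (M' i)}) J"
    unfolding indep_vars_def2 by auto
  show ?thesis unfolding indep_vars_def2
  proof (intro conjI ballI indep_setsI)
    fix j assume "j \<in> I" then show "random_variable (M' j) (X j)" using rv by auto
  next
    fix j assume "j \<in> I" then show "{X j -` A \<inter> space M |A. A \<in> sets (M' j)} \<subseteq> events"
      using rv by (auto intro: measurable_sets)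
  next
    fix A K assume K: "K \<noteq> {}" "K \<subseteq> I" "finite K" "\<forall>j\<in>K. A j \<in> {X j -` A \<inter> space M |A. A \<in> sets (M' j)}"
    have Asub: "A j \<subseteq> space M" if "j \<in> K" for j using K that by auto
    have triv: "A j = {} \<or> A j = space M" if jK: "j \<in> K - J" for j
    proof -
      have "j \<in> I - J" using K jK by auto
      then obtain c where c: "\<forall>w\<in>space M. X j w = c" using const by blast
      obtain B where "A j = X j -` B \<inter> space M" using K(4) jK by blast
      then show ?thesis using c by (cases "c \<in> B") auto
    qed
    show "prob (\<Inter>j\<in>K. A j) = (\<Prod>j\<in>K. prob (A j))"
    proof (cases "\<exists>j\<in>K - J. A j = {}")
      case True
      then obtain j where j: "j \<in> K - J" "A j = {}" by auto
      have "(\<Inter>j\<in>K. A j) = {}" using j by auto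
      moreover have "(\<Prod>j\<in>K. prob (A j)) = 0"
        using j K by (intro prod_zero) (auto intro!: bexI[of _ j])
      ultimately show ?thesis by simp
    next
      case False
      then have full: "A j = space M" if "j \<in> K - J" for j using triv that by auto
      have p1: "(\<Prod>j\<in>K. prob (A j)) = (\<Prod>j\<in>K \<inter> J. prob (A j))"
        using K full by (intro prod.mono_neutral_right) (auto simp: prob_space)
      show ?thesis
      proof (cases "K \<inter> J = {}")
        case True
        then have "(\<Inter>j\<in>K. A j) = space M" using full K Asub by blast
        then show ?thesis using p1 True by (simp add: prob_space)
      next
        case False
        have "(\<Inter>j\<in>K. A j) = (\<Inter>j\<in>K \<inter> J. A j)"
          using full Asub False by blast
        also have "prob \<dots> = (\<Prod>j\<in>K \<inter> J. prob (A j))"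
          using K False by (intro indep_setsD[OF isd]) auto
        finally show ?thesis using p1 by simp
      qed
    qed
  qed
qed



lemma Kset_finite: "finite (Kset d)"
proof -
  have "inj_on (\<lambda>k. restrict k {1..d}) (Kset d)"
    unfolding inj_on_def Kset_def by (auto simp: fun_eq_iff restrict_def) (metis)
  moreover have "(\<lambda>k. restrict k {1..d}) ` Kset d \<subseteq> PiE {1..d} (\<lambda>_. {0..d})"
    unfolding Kset_def by auto
  ultimately show ?thesis
    by (meson finite_PiE finite_atLeastAtMost finite_imageD finite_subset)
qed

definition k0 :: "nat \<Rightarrow> nat \<Rightarrow> nat" where "k0 d = (\<lambda>l. if l \<in> {1..d} then 1 else 0)"

lemma k0_in: "d \<ge> 1 \<Longrightarrow> k0 d \<in> Kset d"
  unfolding Kset_def k0_def by auto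

lemma supp_k0: "supp_list d (k0 d) = [1..<Suc d]"
proof -
  have "{l \<in> {1..d}. k0 d l > 0} = {1..<Suc d}" unfolding k0_def by auto
  then show ?thesis unfolding supp_list_def by simp
qed

lemma Jset_finite: "finite (Jset n s)"
proof -
  have "Jset n s \<subseteq> {xs. set xs \<subseteq> {1..n} \<and> length xs = s}" unfolding Jset_def by auto
  then show ?thesis using finite_lists_length_eq[of "{1..n}" s] finite_subset by blast
qed

lemma Jset_eq: "Jset n s = sorted_list_of_set ` {S. S \<subseteq> {1..n} \<and> card S = s}"
proof
  show "Jset n s \<subseteq> sorted_list_of_set ` {S. S \<subseteq> {1..n} \<and> card S = s}"
  proof
    fix js assume "js \<in> Jset n s"
    then have js: "length js = s" "sorted_wrt (<) js" "set js \<subseteq> {1..n}" unfolding Jset_def by auto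
    then have "distinct js" "sorted js" using strict_sorted_iff by auto
    then have "js = sorted_list_of_set (set js)" 
      by (simp add: sorted_list_of_set.idem_if_sorted_distinct)
    moreover have "card (set js) = s" using js \<open>distinct js\<close> distinct_card by metis
    ultimately show "js \<in> sorted_list_of_set ` {S. S \<subseteq> {1..n} \<and> card S = s}" using js by blast
  qed
next
  show "sorted_list_of_set ` {S. S \<subseteq> {1..n} \<and> card S = s} \<subseteq> Jset n s"
  proof
    fix js assume "js \<in> sorted_list_of_set ` {S. S \<subseteq> {1..n} \<and> card S = s}"
    then obtain S where S: "S \<subseteq> {1..n}" "card S = s" "js = sorted_list_of_set S" by auto
    have "finite S" using S finite_subset by blast
    then show "js \<in> Jset n s" unfolding Jset_def using S by auto
  qed
qed

lemma Jset_card: "card (Jset n s) = n choose s"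
proof -
  have "inj_on sorted_list_of_set {S. S \<subseteq> {1..n} \<and> card S = s}"
    by (rule inj_onI) (metis (mono_tags, lifting) finite_atLeastAtMost mem_Collect_eq rev_finite_subset sorted_list_of_set.set_sorted_key_list_of_set)
  then have "card (Jset n s) = card {S. S \<subseteq> {1..n} \<and> card S = s}"
    unfolding Jset_eq by (rule card_image)
  also have "\<dots> = n choose s" using n_subsets[of "{1..n}" s] by simp
  finally show ?thesis .
qed


lemma tail_bound_nonneg: "0 \<le> tail_bound q y"
  unfolding tail_bound_def by auto

lemma Tfun_le1: "prob_space M \<Longrightarrow> Tfun M f x \<le> 1"
  unfolding Tfun_def by (simp add: prob_space.prob_le_1)

lemma key:
  fixes d n :: nat and q :: ereal and t p x :: real
  assumes d1: "d \<ge> 1" and dn: "d \<le> n" and t: "t > 0" and p: "0 < p" "p \<le> 1/2"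
    and tail: "\<And>y. 0 \<le> y \<Longrightarrow> y < t \<Longrightarrow> p \<le> tail_bound q y"
    and big: "sqrt (real (n choose d)) * t^d > x"
  shows "p ^ (n*d) \<le> U d q x"
proof -
  define J where "J = {1..n} \<times> {1..d}"
  define A where "A = prod_encode ` J"
  define P where "P = Pi_pmf A 0 (\<lambda>_. tp t p)"
  define M where "M = measure_pmf P"
  define xi where "xi = (\<lambda>i m (w::nat\<Rightarrow>real). if i \<in> {1..n} \<and> m \<in> {1..d} then w (prod_encode (i,m)) else 0)"
  define C where "C = real (n choose d)"
  define c where "c = 1 / sqrt C"
  define b where "b = (\<lambda>k js. if k = k0 d \<and> js \<in> Jset n d then c else 0)"
  have Cpos: "C > 0" unfolding C_def using dn by simp
  have finA: "finite A" unfolding A_def J_def by simp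
  have cardA: "card A = n * d" unfolding A_def J_def
    by (subst card_image) (auto simp: inj_prod_encode)
  have p0: "0 \<le> p" using p by simp
  have comp: "map_pmf (\<lambda>w. w a) P = tp t p" if "a \<in> A" for a
    unfolding P_def using Pi_pmf_component[OF finA, of a 0 "\<lambda>_. tp t p"] that by simp
  have xi_in: "xi i m = (\<lambda>w. w (prod_encode (i,m)))" if "i \<in> {1..n}" "m \<in> {1..d}" for i m
    using that unfolding xi_def by auto
  have xi_out: "xi i m = (\<lambda>w. 0)" if "\<not> (i \<in> {1..n} \<and> m \<in> {1..d})" for i m
    using that unfolding xi_def by auto
  have inA: "prod_encode (i,m) \<in> A" if "i \<in> {1..n}" "m \<in> {1..d}" for i m
    using that unfolding A_def J_def by auto
  have finP: "finite (set_pmf P)"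
    unfolding P_def using finA tp_set[OF p0 p(2), of t]
    by (subst set_Pi_pmf[OF finA]) (auto intro!: finite_PiE_dflt intro: finite_subset)
  have int0: "integral\<^sup>L M (xi i m) = 0" for i m
  proof (cases "i \<in> {1..n} \<and> m \<in> {1..d}")
    case True
    have "integral\<^sup>L M (xi i m) = integral\<^sup>L (map_pmf (\<lambda>w. w (prod_encode (i,m))) P) (\<lambda>v. v)"
      unfolding M_def using True xi_in by simp
    also have "\<dots> = 0" using comp[OF inA] True tp_integral[OF p0 p(2) t] by simp
    finally show ?thesis .
  next
    case False then show ?thesis using xi_out by simp
  qed
  have Txi: "Tfun M (xi i m) y \<le> tail_bound q y" if "y \<ge> 0" for i m y
  proof (cases "i \<in> {1..n} \<and> m \<in> {1..d}")
    case True
    have s1: "{w \<in> space M. xi i m w > y} = (\<lambda>w. w (prod_encode (i,m))) -` {v. v > y}"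
      using True by (auto simp: M_def xi_in)
    have s2: "{w \<in> space M. xi i m w < - y} = (\<lambda>w. w (prod_encode (i,m))) -` {v. v < - y}"
      using True by (auto simp: M_def xi_in)
    have e1: "measure M {w \<in> space M. xi i m w > y} = measure (tp t p) {v. v > y}"
      proof -
      have "measure M {w \<in> space M. xi i m w > y} = measure (map_pmf (\<lambda>w. w (prod_encode (i,m))) P) {v. v > y}"
        unfolding s1 by (simp add: M_def)
      moreover have "map_pmf (\<lambda>w. w (prod_encode (i,m))) P = tp t p" using comp inA True by blast
      ultimately show ?thesis by (simp only:)
    qed
    have e2: "measure M {w \<in> space M. xi i m w < - y} = measure (tp t p) {v. v < - y}"
      proof -
      have "measure M {w \<in> space M. xi i m w < - y} = measure (map_pmf (\<lambda>w. w (prod_encode (i,m))) P) {v. v < - y}"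
        unfolding s2 by (simp add: M_def)
      moreover have "map_pmf (\<lambda>w. w (prod_encode (i,m))) P = tp t p" using comp inA True by blast
      ultimately show ?thesis by (simp only:)
    qed
    have "Tfun M (xi i m) y = (if y < t then p else 0)"
      unfolding Tfun_def e1 e2 using that t by (simp add: tp_measure[OF p0 p(2)])
    then show ?thesis using tail[OF that] tail_bound_nonneg[of q y] by auto
  next
    case False
    then show ?thesis using xi_out[OF False] that tail_bound_nonneg[of q y]
      by (simp add: Tfun_def)
  qed
  have indep: "prob_space.indep_vars M (\<lambda>_. borel) (\<lambda>(i, m). xi i m) ({1..} \<times> {1..d})"
  proof -
    interpret prob_space M unfolding M_def by (rule measure_pmf.prob_space_axioms)
    have s1: "indep_vars (\<lambda>_. count_space UNIV) (\<lambda>a f. f a) A"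
      unfolding M_def P_def by (rule indep_vars_Pi_pmf[OF finA])
    have s2: "indep_vars (\<lambda>_. borel) (\<lambda>a f. id (f a)) A"
      by (rule indep_vars_compose2[OF s1]) auto
    have s3: "indep_vars (\<lambda>_. borel) (\<lambda>j f. id (f (prod_encode j))) J"
      using indep_vars_reindex[of prod_encode J "\<lambda>_. borel" "\<lambda>a f. id (f a)"] s2
      unfolding A_def by (simp add: inj_prod_encode)
    have s4: "indep_vars (\<lambda>_. borel) (\<lambda>(i, m). xi i m) J"
      using s3 by (rule indep_vars_cong[THEN iffD1, rotated 3]) (auto simp: J_def xi_def)
    show ?thesis
    proof (rule indep_vars_extend_const[OF s4])
      show "J \<subseteq> {1..} \<times> {1..d}" unfolding J_def by auto
      fix ij assume "ij \<in> {1..} \<times> {1..d} - J"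
      then show "\<exists>c. \<forall>w\<in>space M. (case ij of (i, m) \<Rightarrow> xi i m) w = c"
        unfolding J_def xi_def by (auto split: prod.splits)
    next
      fix ij show "random_variable borel (case ij of (i, m) \<Rightarrow> xi i m)" unfolding M_def by simp
    qed
  qed
  have norm: "(\<Sum>k\<in>Kset d. \<Sum>js\<in>Jset n (length (supp_list d k)). (b k js)\<^sup>2) = 1"
  proof -
    have "(\<Sum>k\<in>Kset d. \<Sum>js\<in>Jset n (length (supp_list d k)). (b k js)\<^sup>2)
        = (\<Sum>k\<in>Kset d. if k = k0 d then (\<Sum>js\<in>Jset n d. c\<^sup>2) else 0)"
      using d1 by (intro sum.cong refl) (auto simp: b_def supp_k0)
    also have "\<dots> = (\<Sum>js\<in>Jset n d. c\<^sup>2)"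
      using k0_in[OF d1] by (simp add: Kset_finite)
    also have "\<dots> = C * c\<^sup>2" by (simp add: Jset_card C_def)
    also have "\<dots> = 1" using Cpos by (simp add: c_def power_divide)
    finally show ?thesis .
  qed
  have adm: "admissible d q M n b xi"
    unfolding admissible_def
  proof (intro conjI allI impI ballI)
    show "prob_space M" unfolding M_def by (rule measure_pmf.prob_space_axioms)
    show "1 \<le> n" using d1 dn by simp
    show "(\<Sum>k\<in>Kset d. \<Sum>js\<in>Jset n (length (supp_list d k)). (b k js)\<^sup>2) = 1" by (rule norm)
    show "prob_space.indep_vars M (\<lambda>_. borel) (\<lambda>(i, m). xi i m) ({1..} \<times> {1..d})" by (rule indep)
    fix i m :: nat assume "1 \<le> i" "m \<in> {1..d}"
    show "integrable M (xi i m)" unfolding M_def using finP by (rule integrable_measure_pmf_finite)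
    show "integral\<^sup>L M (xi i m) = 0" by (rule int0)
    fix y :: real assume "0 \<le> y" then show "Tfun M (xi i m) y \<le> tail_bound q y" by (rule Txi)
  qed
  define E where "E = Pi A (\<lambda>_. {t})"
  have probE: "measure M E = p ^ (n*d)"
  proof -
    have "measure M E = (\<Prod>a\<in>A. measure (tp t p) {t})"
      unfolding M_def P_def E_def by (rule measure_Pi_pmf_Pi[OF finA])
    also have "measure (tp t p) {t} = p" using t by (simp add: tp_measure[OF p0 p(2)])
    finally show ?thesis using cardA by simp
  qed
  have Rval: "Rpoly M d n b xi w = sqrt C * t ^ d" if "w \<in> E" for w
  proof -
    have wt: "w (prod_encode (i,m)) = t" if "i \<in> {1..n}" "m \<in> {1..d}" for i m
      using \<open>w \<in> E\<close> inA[OF that] unfolding E_def by auto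
    have prodt: "(\<Prod>r<d. (xi (js ! r) ([1..<Suc d] ! r) w) ^ k0 d ([1..<Suc d] ! r)
                  - integral\<^sup>L M (\<lambda>v. (xi (js ! r) ([1..<Suc d] ! r) v) ^ k0 d ([1..<Suc d] ! r))) = t ^ d"
      if "js \<in> Jset n d" for js
    proof -
      have "(\<Prod>r<d. (xi (js ! r) ([1..<Suc d] ! r) w) ^ k0 d ([1..<Suc d] ! r)
                  - integral\<^sup>L M (\<lambda>v. (xi (js ! r) ([1..<Suc d] ! r) v) ^ k0 d ([1..<Suc d] ! r)))
            = (\<Prod>r<d. t)"
      proof (intro prod.cong refl)
        fix r assume r: "r \<in> {..<d}"
        have jr: "js ! r \<in> {1..n}" using that r unfolding Jset_def by (auto dest!: nth_mem)
        have Lr: "[1..<Suc d] ! r = Suc r" using r nth_upt[of 1 r "Suc d"] by (simp del: upt_Suc)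
        have mr: "Suc r \<in> {1..d}" using r by auto
        have "k0 d (Suc r) = 1" using mr by (simp add: k0_def)
        then show "(xi (js ! r) ([1..<Suc d] ! r) w) ^ k0 d ([1..<Suc d] ! r)
                  - integral\<^sup>L M (\<lambda>v. (xi (js ! r) ([1..<Suc d] ! r) v) ^ k0 d ([1..<Suc d] ! r)) = t"
          using int0[of "js ! r" "Suc r"] Lr xi_in[OF jr mr] wt[OF jr mr] by simp
      qed
      then show ?thesis by simp
    qed
    have "Rpoly M d n b xi w = (\<Sum>k\<in>Kset d. if k = k0 d then (\<Sum>js\<in>Jset n d. c * t ^ d) else 0)"
      unfolding Rpoly_def
    proof (intro sum.cong refl)
      fix k assume "k \<in> Kset d"
      show "(let L = supp_list d k in \<Sum>js\<in>Jset n (length L). b k js *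
          (\<Prod>r<length L. (xi (js ! r) (L ! r) w) ^ k (L ! r)
                          - integral\<^sup>L M (\<lambda>v. (xi (js ! r) (L ! r) v) ^ k (L ! r))))
          = (if k = k0 d then (\<Sum>js\<in>Jset n d. c * t ^ d) else 0)"
      proof (cases "k = k0 d")
        case True
        have len: "length [1..<Suc d] = d" by simp
        have "(\<Sum>js\<in>Jset n d. b (k0 d) js *
          (\<Prod>r<d. (xi (js ! r) ([1..<Suc d] ! r) w) ^ k0 d ([1..<Suc d] ! r)
                 - integral\<^sup>L M (\<lambda>v. (xi (js ! r) ([1..<Suc d] ! r) v) ^ k0 d ([1..<Suc d] ! r))))
          = (\<Sum>js\<in>Jset n d. c * t ^ d)"
          by (rule sum.cong[OF refl]) (subst prodt, assumption, simp add: b_def)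
        then show ?thesis unfolding True supp_k0 Let_def len by simp
      next
        case False
        then show ?thesis by (simp add: b_def Let_def)
      qed
    qed
    also have "\<dots> = (\<Sum>js\<in>Jset n d. c * t ^ d)"
      using k0_in[OF d1] by (simp add: Kset_finite)
    also have "\<dots> = C * c * t ^ d" by (simp add: Jset_card C_def)
    also have "C * c = sqrt C" using Cpos unfolding c_def
      by (simp add: real_div_sqrt)
    finally show ?thesis .
  qed
  have Esub: "E \<subseteq> {w \<in> space M. Rpoly M d n b xi w > x}"
  proof
    fix w assume "w \<in> E"
    then have "Rpoly M d n b xi w = sqrt C * t ^ d" by (rule Rval)
    then show "w \<in> {w \<in> space M. Rpoly M d n b xi w > x}" using big unfolding C_def M_def by simp
  qed
  have "p ^ (n*d) \<le> measure M {w \<in> space M. Rpoly M d n b xi w > x}"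
    unfolding probE[symmetric] M_def
    using Esub unfolding M_def by (rule measure_pmf.finite_measure_mono) simp
  also have "\<dots> \<le> Tfun M (Rpoly M d n b xi) x" unfolding Tfun_def by simp
  also have "\<dots> \<le> U d q x" unfolding U_def
  proof (rule cSup_upper)
    show "Tfun M (Rpoly M d n b xi) x \<in> {Tfun M (Rpoly M d n b xi) x | M n b xi. admissible d q M n b xi}"
      using adm by blast
    show "bdd_above {Tfun M (Rpoly M d n b xi) x | M n b xi. admissible d q M n b xi}"
    proof (rule bdd_aboveI[of _ 1])
      fix z assume "z \<in> {Tfun M (Rpoly M d n b xi) x | M n b xi. admissible d q M n b xi}"
      then obtain M' n' b' xi' where "z = Tfun M' (Rpoly M' d n' b' xi') x" "admissible d q M' n' b' xi'"
        by blast
      then show "z \<le> 1" unfolding admissible_def using Tfun_le1 by blast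
    qed
  qed
  finally show ?thesis .
qed



lemma exp_pow_eq: "(exp (- a) / 2) ^ k = exp (- (real k * (a + ln 2)))"
proof -
  have "exp (- a) / 2 = exp (- (a + ln 2))" by (simp add: exp_diff exp_minus field_simps)
  then have "(exp (- a) / 2) ^ k = exp (- (a + ln 2)) ^ k" by simp
  also have "\<dots> = exp (real k * (- (a + ln 2)))" by (rule exp_of_nat_mult[symmetric])
  finally show ?thesis by (simp add: algebra_simps)
qed



lemma caseA:
  fixes d :: nat and r x :: real
  assumes d1: "d \<ge> 1" and r: "0 < r" "r \<le> 2" and x: "x \<ge> 1"
  shows "exp (- (real (d*d) * (2 powr (r / real d) + 1)) * x powr (r / real d)) \<le> U d (ereal r) x"
proof -
  define e where "e = r / real d"
  define t where "t = (2*x) powr (1 / real d)"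
  define p where "p = exp (- (t powr r)) / 2"
  have t0: "t > 0" unfolding t_def using x by simp
  have td: "t ^ d = 2 * x"
  proof -
    have "t ^ d = t powr real d" using t0 by (simp add: powr_realpow)
    also have "\<dots> = (2*x) powr (1 / real d * real d)" unfolding t_def by (rule powr_powr)
    also have "1 / real d * real d = 1" using d1 by simp
    finally show ?thesis using x by simp
  qed
  have tr: "t powr r = 2 powr e * x powr e"
  proof -
    have "t powr r = (2*x) powr (1 / real d * r)" unfolding t_def by (rule powr_powr)
    also have "1 / real d * r = e" using e_def by simp
    also have "(2*x) powr e = 2 powr e * x powr e" using x by (simp add: powr_mult)
    finally show ?thesis .
  qed
  have "p ^ (d*d) \<le> U d (ereal r) x"
  proof (rule key)
    show "1 \<le> d" "d \<le> d" "0 < t" using d1 t0 by auto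
    show "0 < p" "p \<le> 1/2" unfolding p_def by auto
    fix y :: real assume y: "0 \<le> y" "y < t"
    have "y powr r \<le> t powr r" using y r by (intro powr_mono2) auto
    then have "exp (- (t powr r)) \<le> exp (- (y powr r))" by simp
    moreover have "p \<le> exp (- (t powr r))" unfolding p_def by simp
    ultimately have "p \<le> exp (- (y powr r))" by linarith
    then show "p \<le> tail_bound (ereal r) y" unfolding tail_bound_def by simp
  next
    show "x < sqrt (real (d choose d)) * t ^ d" using td x by simp
  qed
  moreover have "exp (- (real (d*d) * (2 powr (r / real d) + 1)) * x powr (r / real d)) \<le> p ^ (d*d)"
  proof -
    have pe: "p ^ (d*d) = exp (- (real (d*d) * (t powr r + ln 2)))" unfolding p_def by (rule exp_pow_eq)
    have xe: "x powr e \<ge> 1" using x r d1 unfolding e_def by (intro ge_one_powr_ge_zero) auto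
    have ln2: "ln (2::real) \<le> 1" using ln_le_minus_one[of 2] by simp
    have "t powr r + ln 2 \<le> (2 powr e + 1) * x powr e"
      unfolding tr using xe ln2 by (simp add: distrib_right)
    then have H: "real (d*d) * (t powr r + ln 2) \<le> real (d*d) * ((2 powr e + 1) * x powr e)"
      by (intro mult_left_mono) auto
    have "- (real (d*d) * (2 powr e + 1)) * x powr e \<le> - (real (d*d) * (t powr r + ln 2))"
      using H by (simp only: mult_minus_left mult.assoc)
    then show ?thesis unfolding pe e_def[symmetric] by simp
  qed
  ultimately show ?thesis by linarith
qed

lemma caseB:
  fixes d :: nat and x :: real and q :: ereal
  assumes d1: "d \<ge> 1" and x: "x \<ge> 1"
    and tail1: "\<And>y. 0 \<le> y \<Longrightarrow> y < 1 \<Longrightarrow> exp (-1) \<le> tail_bound q y"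
  shows "exp (- (6 * real (d*d)) * x powr (2 / real d)) \<le> U d q x"
proof -
  define e where "e = 2 / real d"
  define m where "m = nat \<lceil>x powr e\<rceil> + 1"
  define n where "n = d * m"
  define p where "p = (exp (- 1) / 2 :: real)"
  have xe: "x powr e \<ge> 1" using x d1 unfolding e_def by (intro ge_one_powr_ge_zero) auto
  have c0: "real (nat \<lceil>x powr e\<rceil>) = of_int \<lceil>x powr e\<rceil>" using xe by (intro of_nat_nat) simp
  have m_ge: "real m \<ge> x powr e + 1" unfolding m_def using c0 le_of_int_ceiling[of "x powr e"] by simp
  have m_le: "real m \<le> x powr e + 2" unfolding m_def of_nat_add of_nat_1 c0 using of_int_ceiling_le_add_one[of "x powr e"] by linarith
  have m1: "m \<ge> 1" unfolding m_def by simp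
  have dn: "d \<le> n" unfolding n_def using m1 by simp
  have "p ^ (n*d) \<le> U d q x"
  proof (rule key)
    show "1 \<le> d" "d \<le> n" "0 < (1::real)" using d1 dn by auto
    show "0 < p" "p \<le> 1/2" unfolding p_def by auto
    fix y :: real assume y: "0 \<le> y" "y < 1"
    have "p \<le> exp (-1)" unfolding p_def by simp
    then show "p \<le> tail_bound q y" using tail1[OF y] by linarith
  next
    have "(x powr e) ^ d = (x powr e) powr real d"
      using xe x by (intro powr_realpow[symmetric]) simp
    also have "\<dots> = x powr (e * real d)" by (rule powr_powr)
    also have "e * real d = 2" unfolding e_def using d1 by simp
    also have "x powr 2 = x\<^sup>2" using x by (simp add: powr_numeral)
    finally have xd: "(x powr e) ^ d = x\<^sup>2" .
    have "(x powr e) ^ d < (real m) ^ d"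
      using xe m_ge d1 by (intro power_strict_mono) auto
    then have "x\<^sup>2 < (real m) ^ d" using xd by simp
    also have "(real m) ^ d = (real n / real d) ^ d" unfolding n_def using d1 by simp
    also have "\<dots> \<le> real (n choose d)" by (rule binomial_ge_n_over_k_pow_k[OF dn])
    finally have "x < sqrt (real (n choose d))" by (rule real_less_rsqrt)
    then show "x < sqrt (real (n choose d)) * 1 ^ d" by simp
  qed
  moreover have "exp (- (6 * real (d*d)) * x powr (2 / real d)) \<le> p ^ (n*d)"
  proof -
    have pe: "p ^ (n*d) = exp (- (real (n*d) * (1 + ln 2)))" unfolding p_def by (rule exp_pow_eq)
    have ln2: "ln (2::real) \<le> 1" using ln_le_minus_one[of 2] by simp
    have "real (n*d) = real (d*d) * real m" unfolding n_def by simp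
    also have "\<dots> \<le> real (d*d) * (3 * x powr e)"
    proof -
      have "real m \<le> 3 * x powr e" using m_le xe by linarith
      then show ?thesis using mult_left_mono of_nat_0_le_iff by blast
    qed
    finally have nd: "real (n*d) \<le> real (d*d) * (3 * x powr e)" .
    have "real (n*d) * (1 + ln 2) \<le> real (d*d) * (3 * x powr e) * 2"
      using nd ln2 by (intro mult_mono) auto
    then have "- (6 * real (d*d)) * x powr e \<le> - (real (n*d) * (1 + ln 2))" by simp
    then show ?thesis unfolding pe e_def[symmetric] by simp
  qed
  ultimately show ?thesis by linarith
qed

theorem theorem3:
  fixes d :: nat and q :: ereal
  assumes "d \<ge> 1" and "0 < q"
  shows "\<exists>C4>0. \<forall>x\<ge>1. U d q x \<ge> exp (- C4 * x powr (real_of_ereal (min q 2) / real d))"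
proof (cases q)
  case (real r)
  then have r0: "r > 0" using assms by simp
  show ?thesis
  proof (cases "r \<le> 2")
    case True
    then have mq: "real_of_ereal (min q 2) = r" using real by (simp add: min_def)
    show ?thesis unfolding mq
    proof (intro exI[of _ "real (d*d) * (2 powr (r / real d) + 1)"] conjI allI impI)
      show "0 < real (d*d) * (2 powr (r / real d) + 1)" using assms(1) by (simp add: add_pos_nonneg add_nonneg_pos)
      fix x :: real assume "1 \<le> x"
      then show "exp (- (real (d*d) * (2 powr (r / real d) + 1)) * x powr (r / real d)) \<le> U d q x"
        unfolding real by (rule caseA[OF assms(1) r0 True])
    qed
  next
    case False
    then have mq: "real_of_ereal (min q 2) = 2" using real by (simp add: min_def)
    have tl: "exp (-1) \<le> tail_bound q y" if "0 \<le> y" "y < 1" for y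
    proof -
      have "y powr r \<le> 1 powr r" using that r0 by (intro powr_mono2) auto
      then show ?thesis unfolding tail_bound_def real by simp
    qed
    show ?thesis unfolding mq
    proof (intro exI[of _ "6 * real (d*d)"] conjI allI impI)
      show "0 < 6 * real (d*d)" using assms(1) by simp
      fix x :: real assume "1 \<le> x"
      then show "exp (- (6 * real (d*d)) * x powr (2 / real d)) \<le> U d q x"
        by (rule caseB[OF assms(1) _ tl])
    qed
  qed
next
  case PInf
  then have mq: "real_of_ereal (min q 2) = 2" by simp
  have tl: "exp (-1) \<le> tail_bound q y" if "0 \<le> y" "y < 1" for y
    using that unfolding tail_bound_def PInf by simp
  show ?thesis unfolding mq
  proof (intro exI[of _ "6 * real (d*d)"] conjI allI impI)
    show "0 < 6 * real (d*d)" using assms(1) by simp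
    fix x :: real assume "1 \<le> x"
    then show "exp (- (6 * real (d*d)) * x powr (2 / real d)) \<le> U d q x"
      by (rule caseB[OF assms(1) _ tl])
  qed
next
  case MInf
  then show ?thesis using assms by simp
qed


end
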